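(* For any unit-weight graph $G$, there is a persuasive binary signaling scheme with cost exactly $\mathsf{OPT}^{\mathsf{stable}}$.
   Context: Setting. $V$ is a finite set of $n$ task types and $W$ is a symmetric matrix with entries in $\{0,1\}$ and $W_{v,v}=1$ (the unit-weight graph $G$ has edges $\{u,v\}$, $u\ne v$, with $W_{u,v}=1$). A vector $\theta\in\mathbb{R}_{\ge0}^V$ is feasible if $W\theta\ge\mathbf 1$ coordinatewise, and stable if it is feasible and for every $v$, $\theta_v=\min\{x\ge0: x+\sum_{v'\neq v}W_{v,v'}\theta_{v'}\ge1\}$. $\mathsf{OPT}^{\mathsf{stable}}=\min\{\|\theta\|_1:\theta\text{ stable}\}$. Signaling. There are $n$ agents; the type profile $t=(t_1,\dots,t_n)$ is a uniformly random bijection $[n]\to V$. A signaling scheme with finite signal space $\Sigma\subset[0,1]$ is a map $\varphi$ assigning to each bijection $t$ a distribution $\varphi(t)$ on $\Sigma^V$; given $t$, $s\sim\varphi(t)$ is drawn and agent $i$ privately receives $s_{t_i}$. For agent $i$, a signal $\theta\in\Sigma$ with $\Pr[s_{t_i}=\theta]>0$ and $x\ge0$, let $Q_i(x\mid\theta)=\mathbb{E}\big[x+\sum_{v'\neq t_i}W_{t_i,v'}s_{v'}\,\big|\,s_{t_i}=\theta\big]$. The scheme is persuasive if for every agent $i$ and every such $\theta$: $Q_i(\theta\mid\theta)\ge1$ and $\theta=\min\{x\ge0:Q_i(x\mid\theta)\ge1\}$. Its cost is $\mathbb{E}[\|s\|_1]$. Binary means $|\Sigma|=2$. *)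

theory Defs
  imports "HOL-Probability.Probability"
begin

definition unit_weight_graph :: "'v set \<Rightarrow> ('v \<Rightarrow> 'v \<Rightarrow> real) \<Rightarrow> bool" where
  "unit_weight_graph V W \<longleftrightarrow> finite V \<and>
     (\<forall>u\<in>V. \<forall>v\<in>V. W u v \<in> {0, 1} \<and> W u v = W v u) \<and> (\<forall>v\<in>V. W v v = 1)"

definition feasible :: "'v set \<Rightarrow> ('v \<Rightarrow> 'v \<Rightarrow> real) \<Rightarrow> ('v \<Rightarrow> real) \<Rightarrow> bool" where
  "feasible V W \<theta> \<longleftrightarrow> (\<forall>v\<in>V. 0 \<le> \<theta> v) \<and> (\<forall>v\<in>V. (\<Sum>v'\<in>V. W v v' * \<theta> v') \<ge> 1)"

definition stable :: "'v set \<Rightarrow> ('v \<Rightarrow> 'v \<Rightarrow> real) \<Rightarrow> ('v \<Rightarrow> real) \<Rightarrow> bool" where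
  "stable V W \<theta> \<longleftrightarrow> feasible V W \<theta> \<and>
     (\<forall>v\<in>V. \<theta> v = (LEAST x::real. 0 \<le> x \<and> x + (\<Sum>v'\<in>V - {v}. W v v' * \<theta> v') \<ge> 1))"

definition OPT_stable :: "'v set \<Rightarrow> ('v \<Rightarrow> 'v \<Rightarrow> real) \<Rightarrow> real" where
  "OPT_stable V W = Inf {(\<Sum>v\<in>V. \<bar>\<theta> v\<bar>) | \<theta>. stable V W \<theta>}"

text \<open>Type profiles: bijections from the agents {0..<n} (n = card V) onto V,
  represented extensionally (value undefined outside the agents).\<close>
definition profiles :: "'v set \<Rightarrow> (nat \<Rightarrow> 'v) set" where
  "profiles V = {t. bij_betw t {..<card V} V \<and> t \<in> extensional {..<card V}}"

definition valid_scheme :: "'v set \<Rightarrow> real set \<Rightarrow> ((nat \<Rightarrow> 'v) \<Rightarrow> ('v \<Rightarrow> real) pmf) \<Rightarrow> bool" where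
  "valid_scheme V S \<phi> \<longleftrightarrow> finite S \<and> S \<subseteq> {0..1} \<and>
     (\<forall>t\<in>profiles V. set_pmf (\<phi> t) \<subseteq> PiE V (\<lambda>_. S))"

definition joint :: "'v set \<Rightarrow> ((nat \<Rightarrow> 'v) \<Rightarrow> ('v \<Rightarrow> real) pmf) \<Rightarrow> ((nat \<Rightarrow> 'v) \<times> ('v \<Rightarrow> real)) pmf" where
  "joint V \<phi> = pmf_of_set (profiles V) \<bind> (\<lambda>t. map_pmf (\<lambda>s. (t, s)) (\<phi> t))"

definition sig_event :: "nat \<Rightarrow> real \<Rightarrow> ((nat \<Rightarrow> 'v) \<times> ('v \<Rightarrow> real)) set" where
  "sig_event i \<theta> = {(t, s). s (t i) = \<theta>}"

definition Q :: "'v set \<Rightarrow> ('v \<Rightarrow> 'v \<Rightarrow> real) \<Rightarrow> ((nat \<Rightarrow> 'v) \<Rightarrow> ('v \<Rightarrow> real) pmf)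
                  \<Rightarrow> nat \<Rightarrow> real \<Rightarrow> real \<Rightarrow> real" where
  "Q V W \<phi> i x \<theta> = measure_pmf.expectation (cond_pmf (joint V \<phi>) (sig_event i \<theta>))
      (\<lambda>(t, s). x + (\<Sum>v'\<in>V - {t i}. W (t i) v' * s v'))"

definition persuasive :: "'v set \<Rightarrow> ('v \<Rightarrow> 'v \<Rightarrow> real) \<Rightarrow> real set
                           \<Rightarrow> ((nat \<Rightarrow> 'v) \<Rightarrow> ('v \<Rightarrow> real) pmf) \<Rightarrow> bool" where
  "persuasive V W S \<phi> \<longleftrightarrow>
     (\<forall>i<card V. \<forall>\<theta>\<in>S. measure_pmf.prob (joint V \<phi>) (sig_event i \<theta>) > 0 \<longrightarrow>
        Q V W \<phi> i \<theta> \<theta> \<ge> 1 \<and> \<theta> = (LEAST x::real. 0 \<le> x \<and> Q V W \<phi> i x \<theta> \<ge> 1))"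

definition cost :: "'v set \<Rightarrow> ((nat \<Rightarrow> 'v) \<Rightarrow> ('v \<Rightarrow> real) pmf) \<Rightarrow> real" where
  "cost V \<phi> = measure_pmf.expectation (joint V \<phi>) (\<lambda>(t, s). \<Sum>v\<in>V. \<bar>s v\<bar>)"

end

theory Submission
  imports Defs
begin

lemma least_thr: "(LEAST x::real. 0 \<le> x \<and> x + s \<ge> 1) = max 0 (1 - s)"
  by (rule Least_equality) auto

definition indep :: "('v \<Rightarrow> 'v \<Rightarrow> real) \<Rightarrow> 'v set \<Rightarrow> bool" where
  "indep W X \<longleftrightarrow> (\<forall>u\<in>X. \<forall>v\<in>X. u \<noteq> v \<longrightarrow> W u v = 0)"

lemma mult_if0: "(a::real) * (if P then b else 0) = (if P then a * b else 0)" by simp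

lemma restrict_sum: "finite U \<Longrightarrow> B \<subseteq> U \<Longrightarrow> (\<Sum>x\<in>B. f x) = (\<Sum>x\<in>U. if x \<in> B then f x else 0)"
  by (simp add: sum.inter_restrict[symmetric] Int_absorb1)

lemma stab_lemma:
  fixes W :: "'v \<Rightarrow> 'v \<Rightarrow> real"
  shows "finite U \<Longrightarrow> (\<forall>u\<in>U. \<forall>v\<in>U. W u v = W v u \<and> W u v \<in> {0,1}) \<Longrightarrow> (\<forall>v\<in>U. W v v = 1)
    \<Longrightarrow> (\<forall>u\<in>U. 0 \<le> \<theta> u \<and> 0 \<le> c u) \<Longrightarrow> (\<forall>v\<in>U. (\<Sum>u\<in>U. W v u * \<theta> u) \<le> 1)
    \<Longrightarrow> \<exists>X\<subseteq>U. indep W X \<and> (\<Sum>u\<in>U. \<theta> u * c u) \<le> (\<Sum>u\<in>X. c u)"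
proof (induction U rule: finite_psubset_induct)
  case (psubset U)
  note fin = psubset.hyps(1)
  have Wsym: "W a b = W b a" if "a \<in> U" "b \<in> U" for a b
    using bspec[OF bspec[OF psubset.prems(1) that(1)] that(2)] by (rule conjunct1)
  have W01: "W a b \<in> {0,1}" if "a \<in> U" "b \<in> U" for a b
    using bspec[OF bspec[OF psubset.prems(1) that(1)] that(2)] by (rule conjunct2)
  show ?case
  proof (cases "\<exists>v0\<in>U. \<theta> v0 > 0")
    case False
    then have "\<forall>u\<in>U. \<theta> u = 0" using psubset.prems(3) by force
    then show ?thesis by (intro exI[of _ "{}"]) (auto simp: indep_def)
  next
    case True
    then obtain v0 where v0: "v0 \<in> U" "\<theta> v0 > 0" by blast
    define Uv where "Uv v = {u\<in>U. u \<noteq> v \<and> W v u = 0}" for v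
    define S where "S = (\<Sum>u\<in>U. \<theta> u * c u)"
    define Th where "Th = (\<Sum>u\<in>U. \<theta> u)"
    define F where "F v = c v + (\<Sum>u\<in>Uv v. \<theta> u * c u)" for v
    have UvU: "Uv v \<subseteq> U" for v unfolding Uv_def by auto
    have sym: "u \<in> Uv v \<longleftrightarrow> v \<in> Uv u" if "u \<in> U" "v \<in> U" for u v
    proof -
      have "W u v = W v u" using Wsym that by blast
      then show ?thesis using that unfolding Uv_def by auto
    qed
    have low: "(\<Sum>v\<in>Uv u. \<theta> v) \<ge> Th - 1" if u: "u \<in> U" for u
    proof -
      have le: "\<theta> v \<le> W u v * \<theta> v + (if v \<in> Uv u then \<theta> v else 0)" if v: "v \<in> U" for v
      proof -
        have "W u v \<in> {0,1}" using W01 u v by blast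
        then have W01: "W u v = 0 \<or> W u v = 1" by simp
        have Wuu: "W u u = 1" using psubset.prems(2) u by auto
        have th0: "0 \<le> \<theta> v" using psubset.prems(3) v by auto
        show ?thesis
        proof (cases "v = u")
          case True
          then show ?thesis using Wuu th0 by (simp add: Uv_def)
        next
          case False
          show ?thesis
          proof (cases "W u v = 0")
            case True
            then have "v \<in> Uv u" using False v unfolding Uv_def by auto
            then show ?thesis using True by simp
          next
            case F2: False
            then have "W u v = 1" using W01 by simp
            then show ?thesis using th0 by simp
          qed
        qed
      qed
      have "Th \<le> (\<Sum>v\<in>U. W u v * \<theta> v + (if v \<in> Uv u then \<theta> v else 0))"
        unfolding Th_def by (rule sum_mono) (rule le)
      also have "\<dots> = (\<Sum>v\<in>U. W u v * \<theta> v) + (\<Sum>v\<in>U. if v \<in> Uv u then \<theta> v else 0)"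
        by (rule sum.distrib)
      also have "(\<Sum>v\<in>U. if v \<in> Uv u then \<theta> v else 0) = (\<Sum>v\<in>Uv u. \<theta> v)"
        by (rule restrict_sum[OF fin UvU, symmetric])
      finally show ?thesis using psubset.prems(4) u by auto
    qed
    have key: "(\<Sum>v\<in>U. \<theta> v * F v) \<ge> Th * S"
    proof -
      have "(\<Sum>v\<in>U. \<theta> v * (\<Sum>u\<in>Uv v. \<theta> u * c u))
          = (\<Sum>v\<in>U. \<theta> v * (\<Sum>u\<in>U. if u \<in> Uv v then \<theta> u * c u else 0))"
        by (intro sum.cong refl) (simp only: restrict_sum[OF fin UvU])
      also have "\<dots> = (\<Sum>v\<in>U. \<Sum>u\<in>U. if u \<in> Uv v then \<theta> v * (\<theta> u * c u) else 0)"
        by (intro sum.cong refl) (simp add: sum_distrib_left mult_if0)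
      also have "\<dots> = (\<Sum>u\<in>U. \<Sum>v\<in>U. if u \<in> Uv v then \<theta> v * (\<theta> u * c u) else 0)"
        by (rule sum.swap)
      also have "\<dots> = (\<Sum>u\<in>U. \<Sum>v\<in>U. if v \<in> Uv u then (\<theta> u * c u) * \<theta> v else 0)"
        apply (intro sum.cong refl)
        subgoal for u v using sym[of u v] by (simp add: mult.commute)
        done
      also have "\<dots> = (\<Sum>u\<in>U. (\<theta> u * c u) * (\<Sum>v\<in>U. if v \<in> Uv u then \<theta> v else 0))"
        by (intro sum.cong refl) (simp add: sum_distrib_left mult_if0)
      also have "\<dots> = (\<Sum>u\<in>U. (\<theta> u * c u) * (\<Sum>v\<in>Uv u. \<theta> v))"
        by (intro sum.cong refl) (simp only: restrict_sum[OF fin UvU])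
      also have "\<dots> \<ge> (\<Sum>u\<in>U. (\<theta> u * c u) * (Th - 1))"
        by (intro sum_mono mult_left_mono low) (use psubset.prems(3) in auto)
      finally have sec: "(\<Sum>v\<in>U. \<theta> v * (\<Sum>u\<in>Uv v. \<theta> u * c u)) \<ge> (\<Sum>u\<in>U. (\<theta> u * c u) * (Th - 1))" .
      have "(\<Sum>u\<in>U. (\<theta> u * c u) * (Th - 1)) = S * (Th - 1)"
        unfolding S_def by (rule sum_distrib_right[symmetric])
      then have sec2: "(\<Sum>u\<in>U. (\<theta> u * c u) * (Th - 1)) = S * Th - S"
        by (simp add: right_diff_distrib)
      have "(\<Sum>v\<in>U. \<theta> v * F v) = (\<Sum>v\<in>U. \<theta> v * c v + \<theta> v * (\<Sum>u\<in>Uv v. \<theta> u * c u))"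
        unfolding F_def by (simp only: distrib_left)
      also have "\<dots> = S + (\<Sum>v\<in>U. \<theta> v * (\<Sum>u\<in>Uv v. \<theta> u * c u))"
        unfolding S_def by (rule sum.distrib)
      finally have "(\<Sum>v\<in>U. \<theta> v * F v) = S + (\<Sum>v\<in>U. \<theta> v * (\<Sum>u\<in>Uv v. \<theta> u * c u))" .
      then show ?thesis using sec sec2 by (simp add: mult.commute)
    qed
    have "\<exists>v\<in>U. \<theta> v > 0 \<and> F v \<ge> S"
    proof (rule ccontr)
      assume "\<not> ?thesis"
      then have h: "\<forall>v\<in>U. \<theta> v > 0 \<longrightarrow> F v < S" by auto
      have "(\<Sum>v\<in>U. \<theta> v * (F v - S)) < (\<Sum>v\<in>U. 0)"
      proof (rule sum_strict_mono_ex1[OF fin])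
        show "\<forall>x\<in>U. \<theta> x * (F x - S) \<le> 0"
        proof
          fix x assume x: "x \<in> U"
          show "\<theta> x * (F x - S) \<le> 0"
          proof (cases "\<theta> x > 0")
            case True
            then have "F x - S < 0" using h x by auto
            then show ?thesis using True by (simp add: mult_pos_neg less_imp_le)
          next
            case False
            then have "\<theta> x = 0" using psubset.prems(3) x by force
            then show ?thesis by simp
          qed
        qed
        have "F v0 - S < 0" using h v0 by simp
        then have "\<theta> v0 * (F v0 - S) < 0" using v0(2) by (rule mult_pos_neg[rotated])
        then show "\<exists>a\<in>U. \<theta> a * (F a - S) < 0" using v0(1) by blast
      qed
      then have lt: "(\<Sum>v\<in>U. \<theta> v * (F v - S)) < 0" by simp
      have "(\<Sum>v\<in>U. \<theta> v * (F v - S)) = (\<Sum>v\<in>U. \<theta> v * F v - \<theta> v * S)"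
        by (simp only: right_diff_distrib)
      also have "\<dots> = (\<Sum>v\<in>U. \<theta> v * F v) - (\<Sum>v\<in>U. \<theta> v * S)"
        by (rule sum_subtractf)
      also have "\<dots> = (\<Sum>v\<in>U. \<theta> v * F v) - Th * S"
        by (simp only: Th_def sum_distrib_right)
      finally have "(\<Sum>v\<in>U. \<theta> v * F v) - Th * S < 0" using lt by simp
      then have "(\<Sum>v\<in>U. \<theta> v * F v) < Th * S" by simp
      then show False using key by simp
    qed
    then obtain v where v: "v \<in> U" "\<theta> v > 0" "F v \<ge> S" by blast
    have "v \<notin> Uv v" unfolding Uv_def by simp
    then have sub: "Uv v \<subset> U" using UvU[of v] v(1) by blast
    have "\<exists>X\<subseteq>Uv v. indep W X \<and> (\<Sum>u\<in>Uv v. \<theta> u * c u) \<le> (\<Sum>u\<in>X. c u)"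
    proof (rule psubset.IH[OF sub])
      show "\<forall>u\<in>Uv v. \<forall>va\<in>Uv v. W u va = W va u \<and> W u va \<in> {0, 1}"
      proof (intro ballI conjI)
        fix a b assume "a \<in> Uv v" "b \<in> Uv v"
        then have ab: "a \<in> U" "b \<in> U" using UvU by blast+
        show "W a b = W b a" by (rule Wsym[OF ab])
        show "W a b \<in> {0,1}" by (rule W01[OF ab])
      qed
      show "\<forall>va\<in>Uv v. W va va = 1" using psubset.prems(2) UvU by blast
      show "\<forall>u\<in>Uv v. 0 \<le> \<theta> u \<and> 0 \<le> c u" using psubset.prems(3) UvU by blast
      show "\<forall>va\<in>Uv v. (\<Sum>u\<in>Uv v. W va u * \<theta> u) \<le> 1"
      proof
        fix x assume x: "x \<in> Uv v"
        have "(\<Sum>u\<in>Uv v. W x u * \<theta> u) \<le> (\<Sum>u\<in>U. W x u * \<theta> u)"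
        proof (rule sum_mono2[OF fin UvU])
          fix b assume b: "b \<in> U - Uv v"
          have xU: "x \<in> U" using x UvU by blast
          have "W x b \<in> {0,1}" using W01 xU b by blast
          then have "W x b \<ge> 0" by auto
          moreover have "\<theta> b \<ge> 0" using psubset.prems(3) b by blast
          ultimately show "0 \<le> W x b * \<theta> b" by simp
        qed
        moreover have "x \<in> U" using x UvU by blast
        then have "(\<Sum>u\<in>U. W x u * \<theta> u) \<le> 1" by (rule bspec[OF psubset.prems(4)])
        ultimately show "(\<Sum>u\<in>Uv v. W x u * \<theta> u) \<le> 1" by linarith
      qed
    qed
    then obtain X' where X': "X' \<subseteq> Uv v" "indep W X'" "(\<Sum>u\<in>Uv v. \<theta> u * c u) \<le> (\<Sum>u\<in>X'. c u)"
      by blast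
    have "X' \<subseteq> U" using X'(1) UvU[of v] by (rule order_trans)
    then have finX: "finite X'" using fin by (rule finite_subset)
    have vX: "v \<notin> X'" using X'(1) unfolding Uv_def by auto
    show ?thesis
    proof (intro exI[of _ "insert v X'"] conjI)
      show "insert v X' \<subseteq> U" using X'(1) UvU v(1) by blast
      have a: "W v b = 0" if "b \<in> X'" for b using X'(1) that unfolding Uv_def by auto
      have b: "W b v = 0" if "b \<in> X'" for b
      proof -
        have "b \<in> U" using X'(1) UvU that by blast
        then have "W b v = W v b" using Wsym v(1) by blast
        then show ?thesis using a[OF that] by simp
      qed
      show "indep W (insert v X')"
        unfolding indep_def
      proof (intro ballI impI)
        fix x y assume x: "x \<in> insert v X'" and y: "y \<in> insert v X'" and xy: "x \<noteq> y"
        show "W x y = 0"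
        proof (cases "x = v")
          case True
          then have "y \<in> X'" using y xy by auto
          then show ?thesis using a True by simp
        next
          case False
          then have xX: "x \<in> X'" using x by auto
          show ?thesis
          proof (cases "y = v")
            case True then show ?thesis using b[OF xX] by simp
          next
            case False
            then have "y \<in> X'" using y by auto
            then show ?thesis using X'(2) xX xy unfolding indep_def by blast
          qed
        qed
      qed
      have "S \<le> (\<Sum>u\<in>insert v X'. c u)"
        using v(3) X'(3) finX vX unfolding F_def by simp
      then show "(\<Sum>u\<in>U. \<theta> u * c u) \<le> (\<Sum>u\<in>insert v X'. c u)" unfolding S_def .
    qed
  qed
qed

lemma uwg_facts:
  assumes "unit_weight_graph V W"
  shows "finite V" "\<And>u v. u \<in> V \<Longrightarrow> v \<in> V \<Longrightarrow> W u v = W v u"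
    "\<And>u v. u \<in> V \<Longrightarrow> v \<in> V \<Longrightarrow> W u v \<in> {0,1}" "\<And>v. v \<in> V \<Longrightarrow> W v v = 1"
    "\<And>u v. u \<in> V \<Longrightarrow> v \<in> V \<Longrightarrow> W u v \<ge> 0"
proof -
  have A0: "finite V \<and> (\<forall>u\<in>V. \<forall>v\<in>V. W u v \<in> {0, 1} \<and> W u v = W v u) \<and> (\<forall>v\<in>V. W v v = 1)"
    using assms unfolding unit_weight_graph_def .
  note A = conjunct1[OF A0] conjunct1[OF conjunct2[OF A0]] conjunct2[OF conjunct2[OF A0]]
  show "finite V" by (rule A(1))
  fix u v assume u: "u \<in> V" and v: "v \<in> V"
  have B: "W u v \<in> {0, 1} \<and> W u v = W v u" using bspec[OF bspec[OF A(2) u] v] .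
  show "W u v = W v u" using B by (rule conjunct2)
  show C: "W u v \<in> {0,1}" using B by (rule conjunct1)
  show "W u v \<ge> 0" using C by auto
next
  fix v assume v: "v \<in> V"
  have A0: "finite V \<and> (\<forall>u\<in>V. \<forall>v\<in>V. W u v \<in> {0, 1} \<and> W u v = W v u) \<and> (\<forall>v\<in>V. W v v = 1)"
    using assms unfolding unit_weight_graph_def .
  show "W v v = 1" using bspec[OF conjunct2[OF conjunct2[OF A0]] v] .
qed

lemma stable_facts:
  assumes g: "unit_weight_graph V W" and st: "stable V W \<theta>"
  shows "\<And>v. v \<in> V \<Longrightarrow> 0 \<le> \<theta> v"
    "\<And>v. v \<in> V \<Longrightarrow> \<theta> v > 0 \<Longrightarrow> (\<Sum>u\<in>V. W v u * \<theta> u) = 1"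
    "\<And>v. v \<in> V \<Longrightarrow> (\<Sum>u\<in>V. W v u * \<theta> u) \<ge> 1"
proof -
  have S0: "feasible V W \<theta> \<and> (\<forall>v\<in>V. \<theta> v = (LEAST x::real. 0 \<le> x \<and> x + (\<Sum>v'\<in>V - {v}. W v v' * \<theta> v') \<ge> 1))"
    using st unfolding stable_def .
  have F0: "(\<forall>v\<in>V. 0 \<le> \<theta> v) \<and> (\<forall>v\<in>V. (\<Sum>v'\<in>V. W v v' * \<theta> v') \<ge> 1)"
    using conjunct1[OF S0] unfolding feasible_def .
  show "\<And>v. v \<in> V \<Longrightarrow> 0 \<le> \<theta> v" using conjunct1[OF F0] by blast
  show "\<And>v. v \<in> V \<Longrightarrow> (\<Sum>u\<in>V. W v u * \<theta> u) \<ge> 1" using conjunct2[OF F0] by blast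
  fix v assume v: "v \<in> V" and pos: "\<theta> v > 0"
  have "\<theta> v = (LEAST x::real. 0 \<le> x \<and> x + (\<Sum>v'\<in>V - {v}. W v v' * \<theta> v') \<ge> 1)"
    using bspec[OF conjunct2[OF S0] v] .
  then have "\<theta> v = max 0 (1 - (\<Sum>u\<in>V - {v}. W v u * \<theta> u))"
    by (simp only: least_thr)
  then have "\<theta> v = 1 - (\<Sum>u\<in>V - {v}. W v u * \<theta> u)" using pos by linarith
  moreover have "(\<Sum>u\<in>V. W v u * \<theta> u) = W v v * \<theta> v + (\<Sum>u\<in>V - {v}. W v u * \<theta> u)"
    using uwg_facts(1)[OF g] v by (simp add: sum.remove)
  ultimately show "(\<Sum>u\<in>V. W v u * \<theta> u) = 1" using uwg_facts(4)[OF g v] by simp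
qed

definition wt :: "'v set \<Rightarrow> ('v \<Rightarrow> 'v \<Rightarrow> real) \<Rightarrow> 'v \<Rightarrow> real" where
  "wt V W u = (\<Sum>v\<in>V. W u v)"

lemma H_theta:
  assumes g: "unit_weight_graph V W" and st: "stable V W \<theta>"
  shows "\<exists>X. X \<subseteq> V \<and> indep W X \<and>
     real (card V) - t * (\<Sum>v\<in>V. \<theta> v) \<le> (\<Sum>u\<in>X. wt V W u) - t * real (card X)"
proof -
  note fin = uwg_facts(1)[OF g]
  define c where "c u = wt V W u - t" for u
  define U where "U = {u\<in>V. \<theta> u > 0 \<and> c u > 0}"
  have UV: "U \<subseteq> V" unfolding U_def by auto
  have finU: "finite U" using UV fin by (rule finite_subset)
  have "\<exists>X\<subseteq>U. indep W X \<and> (\<Sum>u\<in>U. \<theta> u * c u) \<le> (\<Sum>u\<in>X. c u)"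
  proof (rule stab_lemma[OF finU])
    show "\<forall>u\<in>U. \<forall>v\<in>U. W u v = W v u \<and> W u v \<in> {0, 1}"
    proof (intro ballI conjI)
      fix a b assume "a \<in> U" "b \<in> U"
      then have ab: "a \<in> V" "b \<in> V" using UV by blast+
      show "W a b = W b a" by (rule uwg_facts(2)[OF g ab])
      show "W a b \<in> {0,1}" by (rule uwg_facts(3)[OF g ab])
    qed
    show "\<forall>v\<in>U. W v v = 1"
    proof
      fix a assume "a \<in> U"
      then have "a \<in> V" using UV by blast
      then show "W a a = 1" by (rule uwg_facts(4)[OF g])
    qed
    show "\<forall>u\<in>U. 0 \<le> \<theta> u \<and> 0 \<le> c u" unfolding U_def by auto
    show "\<forall>v\<in>U. (\<Sum>u\<in>U. W v u * \<theta> u) \<le> 1"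
    proof
      fix v assume v: "v \<in> U"
      have "(\<Sum>u\<in>U. W v u * \<theta> u) \<le> (\<Sum>u\<in>V. W v u * \<theta> u)"
        by (rule sum_mono2[OF fin UV]) (use uwg_facts(5)[OF g] stable_facts(1)[OF g st] v UV in auto)
      also have "\<dots> = 1" using stable_facts(2)[OF g st] v unfolding U_def by auto
      finally show "(\<Sum>u\<in>U. W v u * \<theta> u) \<le> 1" .
    qed
  qed
  then obtain X where X: "X \<subseteq> U" "indep W X" "(\<Sum>u\<in>U. \<theta> u * c u) \<le> (\<Sum>u\<in>X. c u)" by blast
  have finX: "finite X" using X(1) finU by (rule finite_subset)
  have "real (card V) = (\<Sum>v\<in>V. 1)" by simp
  also have "\<dots> \<le> (\<Sum>v\<in>V. \<Sum>u\<in>V. W v u * \<theta> u)"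
    by (rule sum_mono) (rule stable_facts(3)[OF g st])
  also have "\<dots> = (\<Sum>u\<in>V. \<Sum>v\<in>V. W v u * \<theta> u)" by (rule sum.swap)
  also have "\<dots> = (\<Sum>u\<in>V. \<theta> u * wt V W u)"
    unfolding wt_def sum_distrib_left
  proof (intro sum.cong refl)
    fix u v assume u: "u \<in> V" and v: "v \<in> V"
    have "W v u = W u v" using uwg_facts(2)[OF g v u] .
    then show "W v u * \<theta> u = \<theta> u * W u v" by (simp only: mult.commute)
  qed
  finally have A: "real (card V) - t * (\<Sum>v\<in>V. \<theta> v) \<le> (\<Sum>u\<in>V. \<theta> u * c u)"
    unfolding c_def by (simp add: right_diff_distrib sum_subtractf sum_distrib_left mult.commute)
  have B: "(\<Sum>u\<in>V. \<theta> u * c u) \<le> (\<Sum>u\<in>U. \<theta> u * c u)"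
  proof -
    have "(\<Sum>u\<in>V. \<theta> u * c u) = (\<Sum>u\<in>U. \<theta> u * c u) + (\<Sum>u\<in>V - U. \<theta> u * c u)"
      using fin UV by (metis add.commute sum.subset_diff)
    moreover have "(\<Sum>u\<in>V - U. \<theta> u * c u) \<le> 0"
    proof (rule sum_nonpos)
      fix u assume u: "u \<in> V - U"
      then have "\<theta> u \<ge> 0" using stable_facts(1)[OF g st] by auto
      moreover have "\<theta> u = 0 \<or> c u \<le> 0" using u calculation unfolding U_def by auto
      ultimately show "\<theta> u * c u \<le> 0" by (auto simp: mult_nonneg_nonpos)
    qed
    ultimately show ?thesis by linarith
  qed
  have C: "(\<Sum>u\<in>X. c u) = (\<Sum>u\<in>X. wt V W u) - t * real (card X)"
    unfolding c_def by (simp add: sum_subtractf)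
  show ?thesis using A B C X UV by (intro exI[of _ X]) auto
qed

lemma exists_stable:
  assumes g: "unit_weight_graph V W"
  shows "\<exists>\<theta>. stable V W \<theta>"
proof -
  note fin = uwg_facts(1)[OF g]
  define I where "I = {X. X \<subseteq> V \<and> indep W X}"
  have finI: "finite I" unfolding I_def using fin by auto
  have "{} \<in> I" unfolding I_def indep_def by auto
  define m where "m = Max (card ` I)"
  have "m \<in> card ` I" unfolding m_def using finI \<open>{} \<in> I\<close> by (intro Max_in) auto
  then obtain X where X: "X \<in> I" "card X = m" by auto
  have mx: "card Y \<le> card X" if "Y \<in> I" for Y
    using X(2) that finI unfolding m_def by auto
  have XV: "X \<subseteq> V" "indep W X" using X(1) unfolding I_def by auto
  have finX: "finite X" using XV(1) fin by (rule finite_subset)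
  have dom: "\<exists>u\<in>X. W v u = 1" if v: "v \<in> V" "v \<notin> X" for v
  proof (rule ccontr)
    assume "\<not> ?thesis"
    then have "\<forall>u\<in>X. W v u = 0" using uwg_facts(3)[OF g] v XV by blast
    moreover have "\<forall>u\<in>X. W u v = 0"
    proof
      fix u assume u: "u \<in> X"
      then have "u \<in> V" using XV(1) by blast
      then have "W u v = W v u" using uwg_facts(2)[OF g _ v(1)] by blast
      then show "W u v = 0" using calculation u by simp
    qed
    ultimately have "insert v X \<in> I" using XV v unfolding I_def indep_def by auto
    then have "card (insert v X) \<le> card X" by (rule mx)
    then show False using finX v by simp
  qed
  define \<theta> where "\<theta> v = (if v \<in> X then 1 else 0::real)" for v
  have sumX: "(\<Sum>u\<in>A. W v u * \<theta> u) = (\<Sum>u\<in>A \<inter> X. W v u)" if "A \<subseteq> V" for A v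
  proof -
    have "finite A" using that fin by (rule finite_subset)
    then show ?thesis unfolding \<theta>_def by (simp add: sum.inter_restrict[symmetric] if_distrib cong: if_cong)
  qed
  have "stable V W \<theta>" unfolding stable_def feasible_def
  proof (intro conjI ballI)
    fix v assume v: "v \<in> V"
    show "0 \<le> \<theta> v" unfolding \<theta>_def by auto
    have ge: "(\<Sum>u\<in>V. W v u * \<theta> u) \<ge> 1"
    proof (cases "v \<in> X")
      case True
      have "(\<Sum>u\<in>V. W v u * \<theta> u) = (\<Sum>u\<in>X. W v u)" using sumX[of V v] XV by (simp add: Int_absorb1)
      also have "\<dots> \<ge> (\<Sum>u\<in>{v}. W v u)"
        by (rule sum_mono2[OF finX]) (use True uwg_facts(5)[OF g] XV v in auto)
      finally show ?thesis using uwg_facts(4)[OF g v] by simp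
    next
      case False
      then obtain u where u: "u \<in> X" "W v u = 1" using dom v by blast
      have "(\<Sum>u\<in>V. W v u * \<theta> u) = (\<Sum>u\<in>X. W v u)" using sumX[of V v] XV by (simp add: Int_absorb1)
      also have "\<dots> \<ge> (\<Sum>u\<in>{u}. W v u)"
        by (rule sum_mono2[OF finX]) (use u uwg_facts(5)[OF g] XV v in auto)
      finally show ?thesis using u by simp
    qed
    then show "1 \<le> (\<Sum>v'\<in>V. W v v' * \<theta> v')" by simp
    show "\<theta> v = (LEAST x. 0 \<le> x \<and> 1 \<le> x + (\<Sum>v'\<in>V - {v}. W v v' * \<theta> v'))"
      unfolding least_thr
    proof (cases "v \<in> X")
      case True
      have "(\<Sum>u\<in>V - {v}. W v u * \<theta> u) = (\<Sum>u\<in>(V - {v}) \<inter> X. W v u)" using sumX[of "V - {v}" v] by auto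
      also have "\<dots> = 0" using XV True by (intro sum.neutral) (auto simp: indep_def)
      finally show "\<theta> v = max 0 (1 - (\<Sum>v'\<in>V - {v}. W v v' * \<theta> v'))" using True unfolding \<theta>_def by simp
    next
      case False
      have "(\<Sum>u\<in>V - {v}. W v u * \<theta> u) = (\<Sum>u\<in>V. W v u * \<theta> u)"
        using fin v False by (simp add: sum.remove \<theta>_def)
      then show "\<theta> v = max 0 (1 - (\<Sum>v'\<in>V - {v}. W v v' * \<theta> v'))" using False ge unfolding \<theta>_def by simp
    qed
  qed
  then show ?thesis by blast
qed

lemma sep_reals:
  fixes A B :: "real set"
  assumes fA: "finite A" and fB: "finite B" and lt: "\<forall>x\<in>B. \<forall>y\<in>A. x < y"
  shows "\<exists>t. (\<forall>x\<in>B. x < t) \<and> (\<forall>y\<in>A. t < y)"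
proof (cases "B = {}")
  case True
  show ?thesis
  proof (cases "A = {}")
    case True with \<open>B = {}\<close> show ?thesis by simp
  next
    case False
    have "\<forall>y\<in>A. Min A - 1 < y"
    proof
      fix y assume "y \<in> A"
      then have "Min A \<le> y" using fA by (rule Min_le[rotated])
      then show "Min A - 1 < y" by simp
    qed
    then show ?thesis using True by blast
  qed
next
  case Bne: False
  have mB: "Max B \<in> B" using fB Bne by (rule Max_in)
  have xB: "x \<le> Max B" if "x \<in> B" for x using fB that by (rule Max_ge)
  show ?thesis
  proof (cases "A = {}")
    case True
    have "\<forall>x\<in>B. x < Max B + 1"
    proof
      fix x assume "x \<in> B"
      then have "x \<le> Max B" by (rule xB)
      then show "x < Max B + 1" by simp
    qed
    then show ?thesis using True by blast
  next
    case False
    have mA: "Min A \<in> A" using fA False by (rule Min_in)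
    have yA: "Min A \<le> y" if "y \<in> A" for y using fA that by (rule Min_le)
    have "Max B < Min A" using lt mA mB by blast
    then have "(\<forall>x\<in>B. x < (Max B + Min A) / 2) \<and> (\<forall>y\<in>A. (Max B + Min A) / 2 < y)"
    proof (intro conjI ballI)
      fix x assume "x \<in> B"
      then have "x \<le> Max B" by (rule xB)
      then show "x < (Max B + Min A) / 2" using \<open>Max B < Min A\<close> by (simp add: field_simps)
    next
      fix y assume "y \<in> A"
      then have "Min A \<le> y" by (rule yA)
      then show "(Max B + Min A) / 2 < y" using \<open>Max B < Min A\<close> by (simp add: field_simps)
    qed
    then show ?thesis by blast
  qed
qed

lemma OPT_props:
  assumes g: "unit_weight_graph V W"
  shows "\<And>\<theta>. stable V W \<theta> \<Longrightarrow> (\<Sum>v\<in>V. \<bar>\<theta> v\<bar>) = (\<Sum>v\<in>V. \<theta> v)"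
    "\<And>\<theta>. stable V W \<theta> \<Longrightarrow> OPT_stable V W \<le> (\<Sum>v\<in>V. \<theta> v)"
    "\<And>y. OPT_stable V W < y \<Longrightarrow> \<exists>\<theta>. stable V W \<theta> \<and> (\<Sum>v\<in>V. \<theta> v) < y"
proof -
  define C where "C = {(\<Sum>v\<in>V. \<bar>\<theta> v\<bar>) | \<theta>. stable V W \<theta>}"
  have O: "OPT_stable V W = Inf C" unfolding C_def OPT_stable_def by simp
  show ab: "\<And>\<theta>. stable V W \<theta> \<Longrightarrow> (\<Sum>v\<in>V. \<bar>\<theta> v\<bar>) = (\<Sum>v\<in>V. \<theta> v)"
    using stable_facts(1)[OF g] by (intro sum.cong) auto
  have bdd: "bdd_below C" unfolding C_def by (intro bdd_belowI[of _ 0]) auto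
  have ne: "C \<noteq> {}" using exists_stable[OF g] unfolding C_def by auto
  show "\<And>\<theta>. stable V W \<theta> \<Longrightarrow> OPT_stable V W \<le> (\<Sum>v\<in>V. \<theta> v)"
  proof -
    fix \<theta> assume "stable V W \<theta>"
    then have "(\<Sum>v\<in>V. \<bar>\<theta> v\<bar>) \<in> C" unfolding C_def by auto
    then show "OPT_stable V W \<le> (\<Sum>v\<in>V. \<theta> v)" using ab[OF \<open>stable V W \<theta>\<close>] O bdd cInf_lower by fastforce
  qed
  show "\<And>y. OPT_stable V W < y \<Longrightarrow> \<exists>\<theta>. stable V W \<theta> \<and> (\<Sum>v\<in>V. \<theta> v) < y"
  proof -
    fix y assume "OPT_stable V W < y"
    then have "Inf C < y" using O by simp
    then obtain x where "x \<in> C" "x < y" using cInf_lessD[OF ne] by blast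
    then show "\<exists>\<theta>. stable V W \<theta> \<and> (\<Sum>v\<in>V. \<theta> v) < y" unfolding C_def using ab by auto
  qed
qed

lemma H_OPT:
  assumes g: "unit_weight_graph V W"
  shows "\<exists>X. X \<subseteq> V \<and> indep W X \<and>
     real (card V) - t * OPT_stable V W \<le> (\<Sum>u\<in>X. wt V W u) - t * real (card X)"
proof (rule ccontr)
  assume neg: "\<not> ?thesis"
  define z where "z = OPT_stable V W"
  define I where "I = {X. X \<subseteq> V \<and> indep W X}"
  have finI: "finite I" unfolding I_def using uwg_facts(1)[OF g] by auto
  have "{} \<in> I" unfolding I_def indep_def by auto
  define gap where "gap X = real (card V) - t * z - ((\<Sum>u\<in>X. wt V W u) - t * real (card X))" for X
  have gpos: "gap X > 0" if "X \<in> I" for X using neg that unfolding gap_def I_def z_def by auto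
  define \<delta> where "\<delta> = Min (gap ` I)"
  have dpos: "\<delta> > 0" unfolding \<delta>_def using finI \<open>{} \<in> I\<close> gpos by (subst Min_gr_iff) auto
  have dle: "\<delta> \<le> gap X" if "X \<in> I" for X unfolding \<delta>_def using finI that by auto
  show False
  proof (cases "t \<le> 0")
    case True
    obtain \<theta> where st: "stable V W \<theta>" using exists_stable[OF g] by blast
    obtain X where X: "X \<subseteq> V" "indep W X"
      "real (card V) - t * (\<Sum>v\<in>V. \<theta> v) \<le> (\<Sum>u\<in>X. wt V W u) - t * real (card X)"
      using H_theta[OF g st] by blast
    have "z \<le> (\<Sum>v\<in>V. \<theta> v)" using OPT_props(2)[OF g st] z_def by simp
    then have "t * (\<Sum>v\<in>V. \<theta> v) \<le> t * z" using True by (simp add: mult_left_mono_neg)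
    then show False using X gpos[of X] unfolding gap_def I_def by auto
  next
    case False
    then have tp: "t > 0" by simp
    obtain \<theta> where st: "stable V W \<theta>" and lt: "(\<Sum>v\<in>V. \<theta> v) < z + \<delta> / t"
      using OPT_props(3)[OF g, of "z + \<delta> / t"] dpos tp z_def by auto
    obtain X where X: "X \<subseteq> V" "indep W X"
      "real (card V) - t * (\<Sum>v\<in>V. \<theta> v) \<le> (\<Sum>u\<in>X. wt V W u) - t * real (card X)"
      using H_theta[OF g st] by blast
    have "t * (\<Sum>v\<in>V. \<theta> v) < t * (z + \<delta> / t)" using lt tp by simp
    also have "\<dots> = t * z + \<delta>" using tp by (simp add: field_simps)
    finally have "t * (\<Sum>v\<in>V. \<theta> v) < t * z + \<delta>" .
    moreover have "\<delta> \<le> gap X" using dle X unfolding I_def by auto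
    ultimately show False using X(3) unfolding gap_def by linarith
  qed
qed

lemma mix_exists:
  assumes g: "unit_weight_graph V W"
  shows "\<exists>X1 X2 l. X1 \<subseteq> V \<and> indep W X1 \<and> X2 \<subseteq> V \<and> indep W X2 \<and> 0 \<le> l \<and> l \<le> 1 \<and>
     l * real (card X1) + (1 - l) * real (card X2) = OPT_stable V W \<and>
     real (card V) \<le> l * (\<Sum>u\<in>X1. wt V W u) + (1 - l) * (\<Sum>u\<in>X2. wt V W u)"
proof (rule ccontr)
  assume neg: "\<not> ?thesis"
  define z where "z = OPT_stable V W"
  define n where "n = real (card V)"
  define I where "I = {X. X \<subseteq> V \<and> indep W X}"
  define a where "a X = real (card X)" for X :: "'a set"
  define b where "b X = (\<Sum>u\<in>X. wt V W u)" for X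
  have finI: "finite I" unfolding I_def using uwg_facts(1)[OF g] by auto
  have negs: "\<not> (0 \<le> l \<and> l \<le> 1 \<and> l * a X1 + (1 - l) * a X2 = z \<and> n \<le> l * b X1 + (1 - l) * b X2)"
    if "X1 \<in> I" "X2 \<in> I" for X1 X2 l
    using neg that unfolding I_def a_def b_def z_def n_def by blast
  have eq: "b X < n" if "X \<in> I" "a X = z" for X
    using negs[OF that(1) that(1), of 1] that by auto
  have pair: "(b q - n) / (a q - z) < (n - b p) / (z - a p)"
    if p: "p \<in> I" "a p < z" and q: "q \<in> I" "z < a q" for p q
  proof -
    define l where "l = (a q - z) / (a q - a p)"
    have D: "a q - a p > 0" using p q by simp
    have l01: "0 \<le> l" "l \<le> 1" unfolding l_def using p q D by (auto simp: field_simps)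
    have lD: "l * (a q - a p) = a q - z" unfolding l_def using D by simp
    have "l * a p + (1 - l) * a q = a q - l * (a q - a p)" by (simp add: algebra_simps)
    then have lz: "l * a p + (1 - l) * a q = z" using lD by simp
    have "\<not> n \<le> l * b p + (1 - l) * b q" using negs[OF p(1) q(1), of l] l01 lz by auto
    then have lt: "l * b p + (1 - l) * b q < n" by simp
    have "(l * b p + (1 - l) * b q) * (a q - a p) = (l * (a q - a p)) * b p + ((a q - a p) - l * (a q - a p)) * b q"
      by (simp add: algebra_simps)
    also have "\<dots> = (a q - z) * b p + (z - a p) * b q" using lD by simp
    finally have e1: "(l * b p + (1 - l) * b q) * (a q - a p) = (a q - z) * b p + (z - a p) * b q" .
    have "(l * b p + (1 - l) * b q) * (a q - a p) < n * (a q - a p)"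
      using lt D by (rule mult_strict_right_mono)
    then have "(a q - z) * b p + (z - a p) * b q < n * (a q - a p)" using e1 by simp
    then have "(z - a p) * (b q - n) < (a q - z) * (n - b p)" by (simp add: algebra_simps)
    moreover have "0 < z - a p" "0 < a q - z" using p q by simp_all
    ultimately show ?thesis by (simp add: field_simps algebra_simps)
  qed
  define A where "A = (\<lambda>p. (n - b p) / (z - a p)) ` {p\<in>I. a p < z}"
  define B where "B = (\<lambda>q. (b q - n) / (a q - z)) ` {q\<in>I. z < a q}"
  have "\<exists>t. (\<forall>x\<in>B. x < t) \<and> (\<forall>y\<in>A. t < y)"
    by (rule sep_reals) (use finI pair in \<open>auto simp: A_def B_def\<close>)
  then obtain t where tB: "\<forall>x\<in>B. x < t" and tA: "\<forall>y\<in>A. t < y" by blast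
  obtain X where X: "X \<subseteq> V" "indep W X" "n - t * z \<le> b X - t * a X"
    using H_OPT[OF g, of t] unfolding n_def z_def a_def b_def by blast
  have XI: "X \<in> I" using X unfolding I_def by auto
  consider "a X < z" | "a X = z" | "a X > z" by linarith
  then show False
  proof cases
    case 1
    then have "t < (n - b X) / (z - a X)" using tA XI unfolding A_def by auto
    then have "t * (z - a X) < n - b X" using 1 by (simp add: field_simps)
    then show False using X(3) by (simp add: algebra_simps)
  next
    case 2
    then show False using eq[OF XI 2] X(3) by simp
  next
    case 3
    then have "(b X - n) / (a X - z) < t" using tB XI unfolding B_def by auto
    then have "b X - n < t * (a X - z)" using 3 by (simp add: field_simps)
    then show False using X(3) by (simp add: algebra_simps)
  qed
qed

definition ind :: "'v set \<Rightarrow> 'v set \<Rightarrow> 'v \<Rightarrow> real" where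
  "ind V D = (\<lambda>v. if v \<in> V then (if v \<in> D then 1 else 0) else undefined)"

definition sw :: "'v \<Rightarrow> 'v \<Rightarrow> 'v \<Rightarrow> 'v" where
  "sw a b x = (if x = a then b else if x = b then a else x)"

lemma sw_sw[simp]: "sw a b (sw a b x) = x" unfolding sw_def by auto

lemma profiles_fin_ne:
  assumes "finite V"
  shows "finite (profiles V)" "profiles V \<noteq> {}"
proof -
  have "profiles V \<subseteq> PiE {..<card V} (\<lambda>_. V)"
    unfolding profiles_def PiE_def Pi_def by (auto dest: bij_betw_apply)
  then show "finite (profiles V)" by (rule finite_subset) (rule finite_PiE, simp, rule assms)
  obtain h where h: "bij_betw h {0..<card V} V" using ex_bij_betw_nat_finite[OF assms] by blast
  have "bij_betw (restrict h {..<card V}) {..<card V} V"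
    using h by (subst bij_betw_cong[where g = h]) (auto simp: atLeast0LessThan)
  then have "restrict h {..<card V} \<in> profiles V" unfolding profiles_def by auto
  then show "profiles V \<noteq> {}" by auto
qed

lemma profile_apply: "t \<in> profiles V \<Longrightarrow> i < card V \<Longrightarrow> t i \<in> V"
  unfolding profiles_def by (auto dest: bij_betw_apply)

lemma fiber_le:
  assumes fin: "finite V" and i: "i < card V" and v: "v \<in> V" and v': "v' \<in> V"
  shows "card {t\<in>profiles V. t i = v} \<le> card {t\<in>profiles V. t i = v'}"
proof -
  define n where "n = card V"
  define f where "f t = restrict (sw v v' \<circ> t) {..<n}" for t :: "nat \<Rightarrow> 'a"
  have swb: "bij_betw (sw v v') V V"
    by (rule bij_betwI[where g = "sw v v'"]) (use v v' in \<open>auto simp: sw_def\<close>)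
  have fP: "f t \<in> profiles V" if t: "t \<in> profiles V" for t
  proof -
    have "bij_betw t {..<n} V" using t unfolding profiles_def n_def by auto
    then have "bij_betw (sw v v' \<circ> t) {..<n} V" using swb by (rule bij_betw_trans)
    then have "bij_betw (f t) {..<n} V" unfolding f_def by (subst bij_betw_cong[where g = "sw v v' \<circ> t"]) auto
    then show ?thesis unfolding profiles_def n_def f_def by auto
  qed
  have inj: "inj_on f (profiles V)"
  proof (rule inj_onI)
    fix t1 t2 assume t1: "t1 \<in> profiles V" and t2: "t2 \<in> profiles V" and eq: "f t1 = f t2"
    show "t1 = t2"
    proof (rule extensionalityI[where A = "{..<n}"])
      show "t1 \<in> extensional {..<n}" "t2 \<in> extensional {..<n}" using t1 t2 unfolding profiles_def n_def by auto
      fix x assume x: "x \<in> {..<n}"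
      have "sw v v' (t1 x) = sw v v' (t2 x)" using fun_cong[OF eq, of x] x unfolding f_def by auto
      then have "sw v v' (sw v v' (t1 x)) = sw v v' (sw v v' (t2 x))" by simp
      then show "t1 x = t2 x" by simp
    qed
  qed
  have "f ` {t\<in>profiles V. t i = v} \<subseteq> {t\<in>profiles V. t i = v'}"
    using fP i unfolding f_def n_def by (auto simp: sw_def)
  moreover have "finite {t\<in>profiles V. t i = v'}" using profiles_fin_ne(1)[OF fin] by auto
  moreover have "inj_on f {t\<in>profiles V. t i = v}" using inj by (rule inj_on_subset) auto
  ultimately show ?thesis by (rule card_inj_on_le[rotated])
qed

lemma fiber_sum:
  assumes fin: "finite V" and i: "i < card V"
  shows "\<exists>c0\<ge>0. \<forall>K::'v \<Rightarrow> real. (\<Sum>t\<in>profiles V. K (t i)) = c0 * (\<Sum>v\<in>V. K v)"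
proof -
  have "V \<noteq> {}" using i by auto
  then obtain v0 where v0: "v0 \<in> V" by blast
  define c0 where "c0 = real (card {t\<in>profiles V. t i = v0})"
  have cv: "card {t\<in>profiles V. t i = v} = card {t\<in>profiles V. t i = v0}" if "v \<in> V" for v
    using fiber_le[OF fin i that v0] fiber_le[OF fin i v0 that] by simp
  show ?thesis
  proof (intro exI[of _ c0] conjI allI)
    show "c0 \<ge> 0" unfolding c0_def by simp
    fix K :: "'v \<Rightarrow> real"
    have "(\<Sum>t\<in>profiles V. K (t i)) = (\<Sum>v\<in>V. \<Sum>t\<in>{t\<in>profiles V. t i = v}. K (t i))"
      by (rule sum.group[symmetric]) (use profiles_fin_ne(1)[OF fin] fin profile_apply i in auto)
    also have "\<dots> = (\<Sum>v\<in>V. c0 * K v)"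
      by (intro sum.cong refl) (simp add: cv c0_def)
    finally show "(\<Sum>t\<in>profiles V. K (t i)) = c0 * (\<Sum>v\<in>V. K v)" by (simp add: sum_distrib_left)
  qed
qed

lemma cond_exp:
  fixes p :: "'a pmf" and f :: "'a \<Rightarrow> real"
  assumes fin: "finite (set_pmf p)" and pos: "measure_pmf.prob p A > 0"
  shows "measure_pmf.expectation (cond_pmf p A) f
       = measure_pmf.expectation p (\<lambda>x. indicator A x * f x) / measure_pmf.prob p A"
proof -
  have ne: "set_pmf p \<inter> A \<noteq> {}" using pos measure_pmf_zero_iff[of p A] by auto
  have "measure_pmf.expectation (cond_pmf p A) f = (\<Sum>x\<in>set_pmf p. f x * pmf (cond_pmf p A) x)"
    by (rule integral_measure_pmf_real) (use fin ne in auto)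
  also have "\<dots> = (\<Sum>x\<in>set_pmf p. (indicator A x * f x) * pmf p x / measure_pmf.prob p A)"
    by (intro sum.cong refl) (simp add: pmf_cond[OF ne] indicator_def)
  also have "\<dots> = (\<Sum>x\<in>set_pmf p. (indicator A x * f x) * pmf p x) / measure_pmf.prob p A"
    by (simp add: sum_divide_distrib)
  also have "(\<Sum>x\<in>set_pmf p. (indicator A x * f x) * pmf p x) = measure_pmf.expectation p (\<lambda>x. indicator A x * f x)"
    by (rule integral_measure_pmf_real[symmetric]) (use fin in auto)
  finally show ?thesis .
qed

lemma prob_as_exp:
  fixes p :: "'a pmf"
  shows "measure_pmf.prob p A = measure_pmf.expectation p (indicator A)"
  by simp

definition psi :: "'v set \<Rightarrow> 'v set \<Rightarrow> 'v set \<Rightarrow> real \<Rightarrow> ('v \<Rightarrow> real) pmf" where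
  "psi V X1 X2 l = map_pmf (\<lambda>b. if b then ind V X1 else ind V X2) (bernoulli_pmf l)"

lemma set_psi: "set_pmf (psi V X1 X2 l) \<subseteq> {ind V X1, ind V X2}"
  unfolding psi_def by auto

lemma finite_psi: "finite (set_pmf (psi V X1 X2 l))"
  using set_psi by (rule finite_subset) simp

lemma set_joint:
  assumes fin: "finite V"
  shows "set_pmf (joint V (\<lambda>_. psi V X1 X2 l)) \<subseteq> profiles V \<times> {ind V X1, ind V X2}"
proof -
  note P = profiles_fin_ne[OF fin]
  have "set_pmf (joint V (\<lambda>_. psi V X1 X2 l)) = (\<Union>t\<in>profiles V. (\<lambda>s. (t, s)) ` set_pmf (psi V X1 X2 l))"
    unfolding joint_def using P by simp
  also have "\<dots> \<subseteq> (\<Union>t\<in>profiles V. (\<lambda>s. (t, s)) ` {ind V X1, ind V X2})"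
    using set_psi[of V X1 X2 l] by blast
  also have "\<dots> \<subseteq> profiles V \<times> {ind V X1, ind V X2}" by blast
  finally show ?thesis .
qed

lemma finite_joint: "finite V \<Longrightarrow> finite (set_pmf (joint V (\<lambda>_. psi V X1 X2 l)))"
  by (rule finite_subset[OF set_joint]) (simp_all add: profiles_fin_ne(1))

lemma joint_exp:
  assumes fin: "finite V" and l: "0 \<le> l" "l \<le> 1"
  shows "measure_pmf.expectation (joint V (\<lambda>_. psi V X1 X2 l)) h
    = (\<Sum>t\<in>profiles V. l * h (t, ind V X1) + (1 - l) * h (t, ind V X2)) / real (card (profiles V))"
proof -
  note P = profiles_fin_ne[OF fin]
  have "measure_pmf.expectation (joint V (\<lambda>_. psi V X1 X2 l)) h
     = (\<Sum>a\<in>profiles V. pmf (pmf_of_set (profiles V)) a *\<^sub>R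
          measure_pmf.expectation (map_pmf (\<lambda>s. (a, s)) (psi V X1 X2 l)) h)"
    unfolding joint_def
    by (rule pmf_expectation_bind) (auto simp: P intro!: finite_imageI finite_psi)
  also have "\<dots> = (\<Sum>a\<in>profiles V. (l * h (a, ind V X1) + (1 - l) * h (a, ind V X2)) / real (card (profiles V)))"
  proof (intro sum.cong refl)
    fix a assume a: "a \<in> profiles V"
    have "measure_pmf.expectation (map_pmf (\<lambda>s. (a, s)) (psi V X1 X2 l)) h = l * h (a, ind V X1) + (1 - l) * h (a, ind V X2)"
      unfolding psi_def using l by (simp add: mult.commute)
    then show "pmf (pmf_of_set (profiles V)) a *\<^sub>R measure_pmf.expectation (map_pmf (\<lambda>s. (a, s)) (psi V X1 X2 l)) h
        = (l * h (a, ind V X1) + (1 - l) * h (a, ind V X2)) / real (card (profiles V))"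
      using a P by simp
  qed
  also have "\<dots> = (\<Sum>t\<in>profiles V. l * h (t, ind V X1) + (1 - l) * h (t, ind V X2)) / real (card (profiles V))"
    by (rule sum_divide_distrib[symmetric])
  finally show ?thesis .
qed

lemma exp_add_const:
  fixes M :: "'a pmf" and c :: real and F :: "'a \<Rightarrow> real"
  assumes "finite (set_pmf M)"
  shows "measure_pmf.expectation M (\<lambda>y. c + F y) = c + measure_pmf.expectation M F"
proof -
  have i1: "integrable (measure_pmf M) (\<lambda>y. c)" by (rule integrable_measure_pmf_finite[OF assms])
  have i2: "integrable (measure_pmf M) F" by (rule integrable_measure_pmf_finite[OF assms])
  show ?thesis using Bochner_Integration.integral_add[OF i1 i2] by (simp add: measure_pmf.prob_space)
qed

lemma ind_val: "v \<in> V \<Longrightarrow> ind V D v = (if v \<in> D then 1 else 0)"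
  unfolding ind_def by simp

lemma ind_PiE: "ind V D \<in> PiE V (\<lambda>_. {0, 1})"
  unfolding ind_def PiE_def extensional_def by auto

lemma ind_nbr_zero:
  assumes D: "D \<subseteq> V" "indep W D" and u: "u \<in> D"
  shows "(\<Sum>v'\<in>V - {u}. W u v' * ind V D v') = 0"
proof (rule sum.neutral, rule ballI)
  fix v' assume v': "v' \<in> V - {u}"
  show "W u v' * ind V D v' = 0"
  proof (cases "v' \<in> D")
    case True
    then have "W u v' = 0" using D(2) u v' unfolding indep_def by auto
    then show ?thesis by simp
  next
    case False
    then show ?thesis using v' by (simp add: ind_val)
  qed
qed

lemma ind_abs_sum:
  assumes "finite V" "D \<subseteq> V"
  shows "(\<Sum>v\<in>V. \<bar>ind V D v\<bar>) = real (card D)"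
proof -
  have "(\<Sum>v\<in>V. \<bar>ind V D v\<bar>) = (\<Sum>v\<in>V. if v \<in> D then 1 else 0)"
    by (intro sum.cong refl) (simp add: ind_val)
  also have "\<dots> = (\<Sum>v\<in>D. 1)" using restrict_sum[OF assms, of "\<lambda>_. 1::real"] by simp
  finally show ?thesis by simp
qed

lemma K_sum:
  assumes g: "unit_weight_graph V W" and D: "D \<subseteq> V" "indep W D"
  shows "(\<Sum>v\<in>V. if ind V D v = 0 then (\<Sum>v'\<in>V - {v}. W v v' * ind V D v') - 1 else 0)
       = (\<Sum>u\<in>D. wt V W u) - real (card V)"
proof -
  note fin = uwg_facts(1)[OF g]
  have finD: "finite D" using D(1) fin by (rule finite_subset)
  have nb: "(\<Sum>v'\<in>V - {v}. W v v' * ind V D v') = (\<Sum>u\<in>D. W v u)" if v: "v \<in> V" "v \<notin> D" for v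
  proof -
    have "(\<Sum>v'\<in>V - {v}. W v v' * ind V D v') = (\<Sum>v'\<in>V - {v}. if v' \<in> D then W v v' else 0)"
      by (intro sum.cong refl) (simp add: ind_val)
    also have "\<dots> = (\<Sum>u\<in>D. W v u)"
      by (rule restrict_sum[symmetric]) (use fin D(1) v in auto)
    finally show ?thesis .
  qed
  have "(\<Sum>v\<in>V. if ind V D v = 0 then (\<Sum>v'\<in>V - {v}. W v v' * ind V D v') - 1 else 0)
      = (\<Sum>v\<in>V. if v \<in> V - D then (\<Sum>u\<in>D. W v u) - 1 else 0)"
  proof (intro sum.cong refl)
    fix v assume v: "v \<in> V"
    show "(if ind V D v = 0 then (\<Sum>v'\<in>V - {v}. W v v' * ind V D v') - 1 else 0)
        = (if v \<in> V - D then (\<Sum>u\<in>D. W v u) - 1 else 0)"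
    proof (cases "v \<in> D")
      case True then show ?thesis using v by (simp add: ind_val)
    next
      case False then show ?thesis using v nb[OF v False] by (simp add: ind_val)
    qed
  qed
  also have "\<dots> = (\<Sum>v\<in>V - D. (\<Sum>u\<in>D. W v u) - 1)"
    by (rule restrict_sum[symmetric]) (use fin in auto)
  also have "\<dots> = (\<Sum>v\<in>V - D. \<Sum>u\<in>D. W v u) - real (card (V - D))"
    by (simp add: sum_subtractf)
  also have "(\<Sum>v\<in>V - D. \<Sum>u\<in>D. W v u) = (\<Sum>u\<in>D. \<Sum>v\<in>V - D. W u v)"
  proof -
    have "(\<Sum>v\<in>V - D. \<Sum>u\<in>D. W v u) = (\<Sum>u\<in>D. \<Sum>v\<in>V - D. W v u)" by (rule sum.swap)
    also have "\<dots> = (\<Sum>u\<in>D. \<Sum>v\<in>V - D. W u v)"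
    proof (intro sum.cong refl)
      fix u v assume u: "u \<in> D" and v: "v \<in> V - D"
      have "v \<in> V" "u \<in> V" using u v D(1) by blast+
      then show "W v u = W u v" by (rule uwg_facts(2)[OF g])
    qed
    finally show ?thesis .
  qed
  also have "\<dots> = (\<Sum>u\<in>D. wt V W u - 1)"
  proof (intro sum.cong refl)
    fix u assume u: "u \<in> D"
    have uV: "u \<in> V" using u D(1) by blast
    have "(\<Sum>v\<in>V - D. W u v) = (\<Sum>v\<in>V. W u v) - (\<Sum>v\<in>D. W u v)"
      using fin D(1) by (rule sum_diff)
    moreover have "(\<Sum>v\<in>D. W u v) = W u u + (\<Sum>v\<in>D - {u}. W u v)"
      using finD u by (rule sum.remove)
    moreover have "(\<Sum>v\<in>D - {u}. W u v) = 0"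
      using D(2) u unfolding indep_def by (intro sum.neutral) auto
    moreover have "W u u = 1" using uwg_facts(4)[OF g uV] .
    ultimately show "(\<Sum>v\<in>V - D. W u v) = wt V W u - 1" unfolding wt_def by simp
  qed
  also have "real (card (V - D)) = real (card V) - real (card D)"
    using D(1) fin by (simp add: card_Diff_subset finD card_mono of_nat_diff)
  finally show ?thesis by (simp add: sum_subtractf)
qed

lemma case_prod_plus: "(\<lambda>(t, s). x + f t s) = (\<lambda>y. x + (case y of (t, s) \<Rightarrow> f t s))"
  by (rule ext) (simp split: prod.split)

lemma aux1: "(n::real) \<le> l * a + (1 - l) * b \<Longrightarrow> 0 \<le> l * (a - n) + (1 - l) * (b - n)"
  by (simp add: algebra_simps)

lemma aux2: "(b::real) \<le> a \<Longrightarrow> e = a / b \<Longrightarrow> 0 < b \<Longrightarrow> 1 \<le> e"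
  by simp

lemma persuasive_mix:
  assumes g: "unit_weight_graph V W"
    and X1: "X1 \<subseteq> V" "indep W X1" and X2: "X2 \<subseteq> V" "indep W X2"
    and l: "0 \<le> l" "l \<le> 1"
    and w: "real (card V) \<le> l * (\<Sum>u\<in>X1. wt V W u) + (1 - l) * (\<Sum>u\<in>X2. wt V W u)"
  shows "persuasive V W {0, 1} (\<lambda>_. psi V X1 X2 l)"
  unfolding persuasive_def
proof (intro allI impI ballI)
  note fin = uwg_facts(1)[OF g]
  fix i \<theta> assume i: "i < card V" and \<theta>: "\<theta> \<in> {0::real, 1}"
  define p where "p = joint V (\<lambda>_. psi V X1 X2 l)"
  define A where "A = (sig_event i \<theta> :: ((nat \<Rightarrow> 'a) \<times> ('a \<Rightarrow> real)) set)"
  define G where "G = (\<lambda>y. case y of (t, s) \<Rightarrow> (\<Sum>v'\<in>V - {t i}. W (t i) v' * s v'))"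
  assume pos0: "0 < measure_pmf.prob (joint V (\<lambda>_. psi V X1 X2 l)) (sig_event i \<theta>)"
  then have pos: "0 < measure_pmf.prob p A" unfolding p_def A_def .
  have finp: "finite (set_pmf p)" unfolding p_def using fin by (rule finite_joint)
  have ne: "set_pmf p \<inter> A \<noteq> {}" using pos measure_pmf_zero_iff[of p A] by auto
  have finc: "finite (set_pmf (cond_pmf p A))"
    using finp by (simp add: set_cond_pmf[OF ne])
  define e where "e = measure_pmf.expectation (cond_pmf p A) G"
  have Qf: "Q V W (\<lambda>_. psi V X1 X2 l) i x \<theta> = x + e" for x
  proof -
    have "Q V W (\<lambda>_. psi V X1 X2 l) i x \<theta> = measure_pmf.expectation (cond_pmf p A) (\<lambda>y. x + G y)"
      unfolding Q_def p_def A_def G_def by (simp only: case_prod_plus)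
    also have "\<dots> = x + e" unfolding e_def using finc by (rule exp_add_const)
    finally show ?thesis .
  qed
  have suppt: "\<exists>t s. y = (t, s) \<and> t \<in> profiles V \<and> (s = ind V X1 \<or> s = ind V X2) \<and> s (t i) = \<theta>"
    if y: "y \<in> set_pmf (cond_pmf p A)" for y
  proof -
    have "y \<in> set_pmf p" "y \<in> A" using y by (simp_all add: set_cond_pmf[OF ne])
    then obtain t s where ts: "y = (t, s)" by (cases y)
    have "(t, s) \<in> profiles V \<times> {ind V X1, ind V X2}"
      using set_joint[OF fin, of X1 X2 l] \<open>y \<in> set_pmf p\<close> ts unfolding p_def by blast
    moreover have "s (t i) = \<theta>" using \<open>y \<in> A\<close> ts unfolding A_def sig_event_def by simp
    ultimately show ?thesis using ts by blast
  qed
  have main: "1 \<le> \<theta> + e \<and> \<theta> = max 0 (1 - e)"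
  proof (cases "\<theta> = 1")
    case True
    have G0: "G y = 0" if y: "y \<in> set_pmf (cond_pmf p A)" for y
    proof -
      obtain t s where ts: "y = (t, s)" "t \<in> profiles V" "s = ind V X1 \<or> s = ind V X2" "s (t i) = \<theta>"
        using suppt[OF y] by blast
      have tiV: "t i \<in> V" using profile_apply[OF ts(2) i] .
      show ?thesis
      proof (cases "s = ind V X1")
        case True
        then have "t i \<in> X1" using ts(4) \<open>\<theta> = 1\<close> tiV by (simp add: ind_val split: if_splits)
        then show ?thesis using ind_nbr_zero[OF X1] ts(1) True unfolding G_def by simp
      next
        case False
        then have s2: "s = ind V X2" using ts(3) by blast
        then have "t i \<in> X2" using ts(4) \<open>\<theta> = 1\<close> tiV by (simp add: ind_val split: if_splits)
        then show ?thesis using ind_nbr_zero[OF X2] ts(1) s2 unfolding G_def by simp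
      qed
    qed
    have "e = (\<Sum>a\<in>{}. G a * pmf (cond_pmf p A) a)"
      unfolding e_def by (rule integral_measure_pmf_real) (use G0 in auto)
    then have "e = 0" by simp
    then show ?thesis using True by simp
  next
    case False
    then have th0: "\<theta> = 0" using \<theta> by simp
    define h where "h y = indicator A y * G y - indicator A y" for y
    define K where "K s v = (if s v = 0 then (\<Sum>v'\<in>V - {v}. W v v' * s v') - 1 else 0)" for s :: "'a \<Rightarrow> real" and v
    define KK where "KK v = l * K (ind V X1) v + (1 - l) * K (ind V X2) v" for v
    have hK: "h (t, s) = K s (t i)" for t s
      unfolding h_def K_def A_def G_def sig_event_def th0 indicator_def by simp
    obtain c0 :: real where c0: "c0 \<ge> 0" "\<And>KF. (\<Sum>t\<in>profiles V. KF (t i)) = c0 * (\<Sum>v\<in>V. KF v)"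
      using fiber_sum[OF fin i] by blast
    have "(\<Sum>v\<in>V. KK v) = l * (\<Sum>v\<in>V. K (ind V X1) v) + (1 - l) * (\<Sum>v\<in>V. K (ind V X2) v)"
      unfolding KK_def by (simp add: sum.distrib sum_distrib_left)
    also have "\<dots> = l * ((\<Sum>u\<in>X1. wt V W u) - real (card V)) + (1 - l) * ((\<Sum>u\<in>X2. wt V W u) - real (card V))"
      unfolding K_def K_sum[OF g X1] K_sum[OF g X2] by (rule refl)
    also have "\<dots> \<ge> 0" using w by (rule aux1)
    finally have KK0: "(\<Sum>v\<in>V. KK v) \<ge> 0" .
    have "measure_pmf.expectation p h
        = (\<Sum>t\<in>profiles V. l * h (t, ind V X1) + (1 - l) * h (t, ind V X2)) / real (card (profiles V))"
      unfolding p_def using fin l by (rule joint_exp)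
    also have "(\<Sum>t\<in>profiles V. l * h (t, ind V X1) + (1 - l) * h (t, ind V X2)) = (\<Sum>t\<in>profiles V. KK (t i))"
      by (intro sum.cong refl) (simp add: hK KK_def)
    also have "\<dots> = c0 * (\<Sum>v\<in>V. KK v)" by (rule c0(2))
    finally have "measure_pmf.expectation p h = c0 * (\<Sum>v\<in>V. KK v) / real (card (profiles V))" .
    then have Eh: "measure_pmf.expectation p h \<ge> 0"
      using divide_nonneg_nonneg[OF mult_nonneg_nonneg[OF c0(1) KK0] of_nat_0_le_iff] by simp
    have "measure_pmf.expectation p h
        = measure_pmf.expectation p (\<lambda>y. indicator A y * G y) - measure_pmf.expectation p (indicator A)"
      unfolding h_def
      by (rule Bochner_Integration.integral_diff; rule integrable_measure_pmf_finite[OF finp])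
    then have "measure_pmf.expectation p (\<lambda>y. indicator A y * G y) \<ge> measure_pmf.prob p A"
      using Eh prob_as_exp[of p A] by linarith
    moreover have "e = measure_pmf.expectation p (\<lambda>y. indicator A y * G y) / measure_pmf.prob p A"
      unfolding e_def using finp pos by (rule cond_exp)
    ultimately have "e \<ge> 1" using pos by (simp only: aux2)
    then show ?thesis using th0 by simp
  qed
  show "1 \<le> Q V W (\<lambda>_. psi V X1 X2 l) i \<theta> \<theta> \<and>
        \<theta> = (LEAST x. 0 \<le> x \<and> 1 \<le> Q V W (\<lambda>_. psi V X1 X2 l) i x \<theta>)"
    unfolding Qf least_thr using main by simp
qed

lemma cost_mix:
  assumes g: "unit_weight_graph V W"
    and X1: "X1 \<subseteq> V" and X2: "X2 \<subseteq> V" and l: "0 \<le> l" "l \<le> 1"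
  shows "cost V (\<lambda>_. psi V X1 X2 l) = l * real (card X1) + (1 - l) * real (card X2)"
proof -
  note fin = uwg_facts(1)[OF g]
  note P = profiles_fin_ne[OF fin]
  have "cost V (\<lambda>_. psi V X1 X2 l)
     = (\<Sum>t\<in>profiles V. l * (\<Sum>v\<in>V. \<bar>ind V X1 v\<bar>) + (1 - l) * (\<Sum>v\<in>V. \<bar>ind V X2 v\<bar>)) / real (card (profiles V))"
    unfolding cost_def using joint_exp[OF fin l, of X1 X2 "\<lambda>(t, s). \<Sum>v\<in>V. \<bar>s v\<bar>"] by simp
  also have "\<dots> = (\<Sum>t\<in>profiles V. l * real (card X1) + (1 - l) * real (card X2)) / real (card (profiles V))"
    using ind_abs_sum[OF fin X1] ind_abs_sum[OF fin X2] by simp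
  also have "\<dots> = l * real (card X1) + (1 - l) * real (card X2)"
    using P by simp
  finally show ?thesis .
qed

theorem theorem5p5:
  fixes V :: "'v set" and W :: "'v \<Rightarrow> 'v \<Rightarrow> real"
  assumes "unit_weight_graph V W"
  shows "\<exists>(S::real set) \<phi>. valid_scheme V S \<phi> \<and> card S = 2 \<and> persuasive V W S \<phi> \<and>
           cost V \<phi> = OPT_stable V W"
proof -
  note g = assms
  obtain X1 X2 l where m: "X1 \<subseteq> V" "indep W X1" "X2 \<subseteq> V" "indep W X2" "0 \<le> l" "l \<le> 1"
     "l * real (card X1) + (1 - l) * real (card X2) = OPT_stable V W"
     "real (card V) \<le> l * (\<Sum>u\<in>X1. wt V W u) + (1 - l) * (\<Sum>u\<in>X2. wt V W u)"
    using mix_exists[OF g] by blast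
  have valid: "valid_scheme V {0, 1} (\<lambda>_. psi V X1 X2 l)"
    unfolding valid_scheme_def
  proof (intro conjI ballI)
    show "finite {0::real, 1}" by simp
    show "{0::real, 1} \<subseteq> {0..1}" by simp
    fix t
    show "set_pmf (psi V X1 X2 l) \<subseteq> PiE V (\<lambda>_. {0, 1})"
      using set_psi[of V X1 X2 l] ind_PiE[of V X1] ind_PiE[of V X2] by blast
  qed
  have card2: "card {0::real, 1} = 2" by simp
  have pers: "persuasive V W {0, 1} (\<lambda>_. psi V X1 X2 l)"
    using persuasive_mix[OF g m(1,2,3,4,5,6,8)] .
  have cst: "cost V (\<lambda>_. psi V X1 X2 l) = OPT_stable V W"
    using cost_mix[OF g m(1,3,5,6)] m(7) by simp
  show ?thesis using valid card2 pers cst by blast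
qed

end
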